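(* Let $A$ be a transferable wqo and $B$ any wqo. Then $\mathbf{w}(A\times B)\ge \mathbf{w}(A)\cdot \mathbf{o}(B)$.
   Context: A wqo is a quasi-order with no infinite bad sequence (a sequence $x_0,x_1,\dots$ is bad if there are no $i<j$ with $x_i\le x_j$). For a wqo, $\mathbf{w}(A)$ (width) is the rank of the forest of nonempty finite sequences of pairwise incomparable elements ordered by initial segment, and $\mathbf{o}(A)$ (maximal order type) is the rank of the forest of nonempty finite bad sequences ordered by initial segment (rank: $r(s)=\sup\{r(t)+1:t$ child of $s\}$, invariant $=\sup_s(r(s)+1)$); equivalently $\mathbf{o}(A)$ is the largest order type of a linear extension of $A$. $A_{\not\le Y}=\{y\in A: y\not\le x \text{ for all } x\in Y\}$. $A$ is transferable if $\mathbf{w}(A_{\not\le Y})=\mathbf{w}(A)$ for every finite $Y\subseteq A$. $A\times B$ has the componentwise order; $\cdot$ is ordinary ordinal multiplication. *)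

theory Defs
  imports Main
begin

definition qo_on :: "'a set \<Rightarrow> ('a \<Rightarrow> 'a \<Rightarrow> bool) \<Rightarrow> bool" where
  "qo_on A le \<longleftrightarrow> (\<forall>x\<in>A. le x x) \<and>
     (\<forall>x\<in>A. \<forall>y\<in>A. \<forall>z\<in>A. le x y \<longrightarrow> le y z \<longrightarrow> le x z)"

definition wqo_on :: "'a set \<Rightarrow> ('a \<Rightarrow> 'a \<Rightarrow> bool) \<Rightarrow> bool" where
  "wqo_on A le \<longleftrightarrow> qo_on A le \<and>
     (\<forall>f::nat \<Rightarrow> 'a. (\<forall>i. f i \<in> A) \<longrightarrow> (\<exists>i j. i < j \<and> le (f i) (f j)))"

text \<open>A forest is given by a node set N and a child relation ch (ch s t: t is a child of s).
  The rank is r(s) = sup{r(t)+1 : t child of s}.  We encode the comparison r(s) \<le> r(t)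
  by its recursive characterisation: r(s) \<le> r(t) iff every child s' of s has a child
  t' of t with r(s') \<le> r(t').\<close>

inductive rank_le :: "'n set \<Rightarrow> ('n \<Rightarrow> 'n \<Rightarrow> bool) \<Rightarrow> 'n \<Rightarrow> 'n \<Rightarrow> bool"
  for N ch where
  "s \<in> N \<Longrightarrow> t \<in> N \<Longrightarrow>
   (\<forall>s'. s' \<in> N \<and> ch s s' \<longrightarrow> (\<exists>t'. t' \<in> N \<and> ch t t' \<and> rank_le N ch s' t'))
   \<Longrightarrow> rank_le N ch s t"

definition rank_classes :: "'n set \<Rightarrow> ('n \<Rightarrow> 'n \<Rightarrow> bool) \<Rightarrow> 'n set set" where
  "rank_classes N ch = {{t \<in> N. rank_le N ch s t \<and> rank_le N ch t s} | s. s \<in> N}"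

text \<open>The invariant sup_s (r(s)+1) of the forest is the order type of the set of ranks
  {r(s) : s \<in> N} (an initial segment of the ordinals); we represent it as the
  well-order on the classes of nodes of equal rank, ordered by rank.\<close>

definition forest_inv :: "'n set \<Rightarrow> ('n \<Rightarrow> 'n \<Rightarrow> bool) \<Rightarrow> 'n set rel" where
  "forest_inv N ch = {(C, D). C \<in> rank_classes N ch \<and> D \<in> rank_classes N ch \<and>
      (\<exists>s\<in>C. \<exists>t\<in>D. rank_le N ch s t)}"

definition extends1 :: "'a list \<Rightarrow> 'a list \<Rightarrow> bool" where
  "extends1 s t \<longleftrightarrow> (\<exists>x. t = s @ [x])"

definition incomparable :: "('a \<Rightarrow> 'a \<Rightarrow> bool) \<Rightarrow> 'a \<Rightarrow> 'a \<Rightarrow> bool" where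
  "incomparable le x y \<longleftrightarrow> \<not> le x y \<and> \<not> le y x"

definition antichain_seqs :: "'a set \<Rightarrow> ('a \<Rightarrow> 'a \<Rightarrow> bool) \<Rightarrow> 'a list set" where
  "antichain_seqs A le = {xs. xs \<noteq> [] \<and> set xs \<subseteq> A \<and>
     (\<forall>i j. i < j \<and> j < length xs \<longrightarrow> incomparable le (xs ! i) (xs ! j))}"

definition bad_seqs :: "'a set \<Rightarrow> ('a \<Rightarrow> 'a \<Rightarrow> bool) \<Rightarrow> 'a list set" where
  "bad_seqs A le = {xs. xs \<noteq> [] \<and> set xs \<subseteq> A \<and>
     (\<forall>i j. i < j \<and> j < length xs \<longrightarrow> \<not> le (xs ! i) (xs ! j))}"

definition width :: "'a set \<Rightarrow> ('a \<Rightarrow> 'a \<Rightarrow> bool) \<Rightarrow> 'a list set rel" where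
  "width A le = forest_inv (antichain_seqs A le) extends1"

definition mot :: "'a set \<Rightarrow> ('a \<Rightarrow> 'a \<Rightarrow> bool) \<Rightarrow> 'a list set rel" where
  "mot A le = forest_inv (bad_seqs A le) extends1"

definition not_below :: "'a set \<Rightarrow> ('a \<Rightarrow> 'a \<Rightarrow> bool) \<Rightarrow> 'a set \<Rightarrow> 'a set" where
  "not_below A le Y = {y \<in> A. \<forall>x\<in>Y. \<not> le y x}"

definition transferable :: "'a set \<Rightarrow> ('a \<Rightarrow> 'a \<Rightarrow> bool) \<Rightarrow> bool" where
  "transferable A le \<longleftrightarrow>
     (\<forall>Y. finite Y \<and> Y \<subseteq> A \<longrightarrow> (width (not_below A le Y) le, width A le) \<in> ordIso)"

definition prod_le :: "('a \<Rightarrow> 'a \<Rightarrow> bool) \<Rightarrow> ('b \<Rightarrow> 'b \<Rightarrow> bool) \<Rightarrow> 'a \<times> 'b \<Rightarrow> 'a \<times> 'b \<Rightarrow> bool" where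
  "prod_le leA leB p q \<longleftrightarrow> leA (fst p) (fst q) \<and> leB (snd p) (snd q)"

text \<open>Ordinal product r \<cdot> s (s copies of r): order on Field r \<times> Field s comparing
  the s-coordinate first (anti-lexicographic).\<close>

definition ord_mult :: "'x rel \<Rightarrow> 'y rel \<Rightarrow> ('x \<times> 'y) rel" where
  "ord_mult r s = {((a, b), (a', b')). a \<in> Field r \<and> a' \<in> Field r \<and> b \<in> Field s \<and> b' \<in> Field s \<and>
      (((b, b') \<in> s \<and> b \<noteq> b') \<or> (b = b' \<and> (a, a') \<in> r))}"

end

theory Submission
  imports Defs "HOL-Library.Ramsey" "HOL-Library.Infinite_Set"
begin


definition fwf :: "'n set \<Rightarrow> ('n \<Rightarrow> 'n \<Rightarrow> bool) \<Rightarrow> bool" where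
  "fwf N ch \<longleftrightarrow> wf {(t, s). s \<in> N \<and> t \<in> N \<and> ch s t}"

lemma rank_le_N: "rank_le N ch s t \<Longrightarrow> s \<in> N \<and> t \<in> N"
  by (erule rank_le.cases) auto

lemma rank_le_D: "rank_le N ch s t \<Longrightarrow> s' \<in> N \<Longrightarrow> ch s s' \<Longrightarrow> \<exists>t'. t' \<in> N \<and> ch t t' \<and> rank_le N ch s' t'"
  by (erule rank_le.cases) auto

lemma rank_le_trans: "rank_le N ch s t \<Longrightarrow> rank_le N ch t u \<Longrightarrow> rank_le N ch s u"
proof (induction arbitrary: u rule: rank_le.induct)
  case (1 s t)
  show ?case
  proof (rule rank_le.intros)
    show "s \<in> N" "u \<in> N" using 1 rank_le_N by fastforce+
    show "\<forall>s'. s' \<in> N \<and> ch s s' \<longrightarrow> (\<exists>u'. u' \<in> N \<and> ch u u' \<and> rank_le N ch s' u')"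
    proof (intro allI impI)
      fix s' assume s': "s' \<in> N \<and> ch s s'"
      then obtain t' where t': "t' \<in> N" "ch t t'" "rank_le N ch s' t'"
        "\<And>u. rank_le N ch t' u \<Longrightarrow> rank_le N ch s' u" using 1(3) by blast
      obtain u' where "u' \<in> N" "ch u u'" "rank_le N ch t' u'"
        using rank_le_D[OF 1(4) t'(1,2)] by blast
      then show "\<exists>u'. u' \<in> N \<and> ch u u' \<and> rank_le N ch s' u'" using t'(4) by blast
    qed
  qed
qed

lemma not_rank_le_D:
  assumes "s \<in> N" "t \<in> N" "\<not> rank_le N ch s t"
  shows "\<exists>s'. s' \<in> N \<and> ch s s' \<and> (\<forall>t'. t' \<in> N \<and> ch t t' \<longrightarrow> \<not> rank_le N ch s' t')"
proof (rule ccontr)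
  assume "\<not> ?thesis"
  then have "\<forall>s'. s' \<in> N \<and> ch s s' \<longrightarrow> (\<exists>t'. t' \<in> N \<and> ch t t' \<and> rank_le N ch s' t')" by blast
  then have "rank_le N ch s t" using assms(1,2) by (rule_tac rank_le.intros) 
  then show False using assms(3) by simp
qed


definition ltR :: "'n set \<Rightarrow> ('n \<Rightarrow> 'n \<Rightarrow> bool) \<Rightarrow> ('n \<times> 'n) set" where
  "ltR N ch = {(u, v). u \<in> N \<and> v \<in> N \<and> rank_le N ch u v \<and> \<not> rank_le N ch v u}"

lemma ltR_iff: "(u, v) \<in> ltR N ch \<longleftrightarrow> u \<in> N \<and> v \<in> N \<and> rank_le N ch u v \<and> \<not> rank_le N ch v u"
  unfolding ltR_def by simp


definition cls :: "'n set \<Rightarrow> ('n \<Rightarrow> 'n \<Rightarrow> bool) \<Rightarrow> 'n \<Rightarrow> 'n set" where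
  "cls N ch s = {t \<in> N. rank_le N ch s t \<and> rank_le N ch t s}"

lemma rank_classes_iff: "C \<in> rank_classes N ch \<longleftrightarrow> (\<exists>s\<in>N. C = cls N ch s)"
  unfolding rank_classes_def cls_def by blast

lemma forest_inv_iff: "(C, D) \<in> forest_inv N ch \<longleftrightarrow>
  C \<in> rank_classes N ch \<and> D \<in> rank_classes N ch \<and> (\<exists>s\<in>C. \<exists>t\<in>D. rank_le N ch s t)"
  unfolding forest_inv_def by simp

lemma Field_forest_inv_sub: "Field (forest_inv N ch) \<subseteq> rank_classes N ch"
  unfolding Field_def forest_inv_def by auto


inductive simr :: "'x rel \<Rightarrow> 'n set \<Rightarrow> ('n \<Rightarrow> 'n \<Rightarrow> bool) \<Rightarrow> 'x \<Rightarrow> 'n \<Rightarrow> bool"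
  for r N ch where
  "t \<in> N \<Longrightarrow> (\<forall>y. (y, x) \<in> r \<and> y \<noteq> x \<longrightarrow> (\<exists>t'. t' \<in> N \<and> ch t t' \<and> simr r N ch y t'))
   \<Longrightarrow> simr r N ch x t"

lemma simr_N: "simr r N ch x t \<Longrightarrow> t \<in> N"
  by (erule simr.cases) auto

lemma simr_D: "simr r N ch x t \<Longrightarrow> (y, x) \<in> r \<Longrightarrow> y \<noteq> x \<Longrightarrow> \<exists>t'. t' \<in> N \<and> ch t t' \<and> simr r N ch y t'"
  by (erule simr.cases) auto

lemma simr_mono: "simr r N ch x s \<Longrightarrow> rank_le N ch s t \<Longrightarrow> simr r N ch x t"
proof (induction arbitrary: t rule: simr.induct)
  case (1 s x)
  show ?case
  proof (rule simr.intros)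
    show "t \<in> N" using rank_le_N[OF 1(3)] by blast
    show "\<forall>y. (y, x) \<in> r \<and> y \<noteq> x \<longrightarrow> (\<exists>t'. t' \<in> N \<and> ch t t' \<and> simr r N ch y t')"
    proof (intro allI impI)
      fix y assume y: "(y, x) \<in> r \<and> y \<noteq> x"
      from 1(2)[rule_format, OF y] obtain s' where s': "s' \<in> N" "ch s s'" "\<forall>t. rank_le N ch s' t \<longrightarrow> simr r N ch y t"
        by blast
      obtain t' where t': "t' \<in> N" "ch t t'" "rank_le N ch s' t'" using rank_le_D[OF 1(3) s'(1,2)] by blast
      have "simr r N ch y t'" using s'(3) t'(3) by blast
      then show "\<exists>t'. t' \<in> N \<and> ch t t' \<and> simr r N ch y t'" using t' by blast
    qed
  qed
qed

lemma simr_transfer_aux: "simr r' N ch z s \<Longrightarrow>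
  (\<forall>x y. (y, x) \<in> r \<and> y \<noteq> x \<longrightarrow> (f y, f x) \<in> r' \<and> f y \<noteq> f x) \<Longrightarrow> z = f x \<Longrightarrow> simr r N ch x s"
proof (induction arbitrary: x rule: simr.induct)
  case (1 s z)
  show ?case
  proof (rule simr.intros)
    show "s \<in> N" by fact
    show "\<forall>y. (y, x) \<in> r \<and> y \<noteq> x \<longrightarrow> (\<exists>t'. t' \<in> N \<and> ch s t' \<and> simr r N ch y t')"
    proof (intro allI impI)
      fix y assume y: "(y, x) \<in> r \<and> y \<noteq> x"
      then have fy: "(f y, z) \<in> r' \<and> f y \<noteq> z" using 1(3,4) by blast
      from 1(2)[rule_format, OF fy] obtain t' where t': "t' \<in> N" "ch s t'"
          "\<forall>x'. (\<forall>x y. (y, x) \<in> r \<and> y \<noteq> x \<longrightarrow> (f y, f x) \<in> r' \<and> f y \<noteq> f x) \<longrightarrow> f y = f x' \<longrightarrow> simr r N ch x' t'"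
        by blast
      have "simr r N ch y t'" using t'(3) 1(3) by blast
      then show "\<exists>t'. t' \<in> N \<and> ch s t' \<and> simr r N ch y t'" using t' by blast
    qed
  qed
qed

lemma simr_transfer: "(\<forall>x y. (y, x) \<in> r \<and> y \<noteq> x \<longrightarrow> (f y, f x) \<in> r' \<and> f y \<noteq> f x) \<Longrightarrow>
  simr r' N ch (f x) s \<Longrightarrow> simr r N ch x s"
  using simr_transfer_aux[of r' N ch "f x" s r f x] by blast

locale wfforest =
  fixes N :: "'n set" and ch :: "'n \<Rightarrow> 'n \<Rightarrow> bool"
  assumes W: "fwf N ch"
begin

lemma fwf_induct:
  assumes "\<And>s. (\<And>s'. s' \<in> N \<Longrightarrow> s \<in> N \<Longrightarrow> ch s s' \<Longrightarrow> P s') \<Longrightarrow> P s"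
  shows "P s"
  using W unfolding fwf_def
proof (induction s rule: wf_induct_rule)
  case (less x)
  show ?case by (rule assms) (rule less, simp)
qed

lemma rank_le_refl: "s \<in> N \<Longrightarrow> rank_le N ch s s"
proof (induction s rule: fwf_induct)
  case (1 s)
  show ?case
  proof (rule rank_le.intros)
    show "s \<in> N" "s \<in> N" by fact+
    show "\<forall>s'. s' \<in> N \<and> ch s s' \<longrightarrow> (\<exists>t'. t' \<in> N \<and> ch s t' \<and> rank_le N ch s' t')"
      using 1 by blast
  qed
qed

lemma rank_le_child: "s \<in> N \<Longrightarrow> t \<in> N \<Longrightarrow> ch s t \<Longrightarrow> rank_le N ch t s"
proof (induction s arbitrary: t rule: fwf_induct)
  case (1 s)
  show ?case
  proof (rule rank_le.intros)
    show "t \<in> N" "s \<in> N" using 1 by auto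
    show "\<forall>s'. s' \<in> N \<and> ch t s' \<longrightarrow> (\<exists>t'. t' \<in> N \<and> ch s t' \<and> rank_le N ch s' t')"
    proof (intro allI impI)
      fix s' assume "s' \<in> N \<and> ch t s'"
      then have "rank_le N ch s' t" using 1(1)[of t s'] 1(2-4) by blast
      then show "\<exists>t'. t' \<in> N \<and> ch s t' \<and> rank_le N ch s' t'" using 1 by blast
    qed
  qed
qed

lemma not_rank_le_child: "s \<in> N \<Longrightarrow> t \<in> N \<Longrightarrow> ch s t \<Longrightarrow> \<not> rank_le N ch s t"
proof (induction s arbitrary: t rule: fwf_induct)
  case (1 s)
  show ?case
  proof
    assume st: "rank_le N ch s t"
    obtain t' where t': "t' \<in> N" "ch t t'" "rank_le N ch t t'"
      using rank_le_D[OF st 1(3,4)] by blast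
    have "\<not> rank_le N ch t t'" using 1(1)[of t t'] 1(2-4) t'(1,2) by blast
    then show False using t' by blast
  qed
qed

lemma rank_le_total: "s \<in> N \<Longrightarrow> t \<in> N \<Longrightarrow> rank_le N ch s t \<or> rank_le N ch t s"
proof (induction s arbitrary: t rule: fwf_induct)
  case (1 s)
  show ?case
  proof (rule ccontr)
    assume nn: "\<not> (rank_le N ch s t \<or> rank_le N ch t s)"
    then obtain s' where s': "s' \<in> N" "ch s s'" "\<forall>t'. t' \<in> N \<and> ch t t' \<longrightarrow> \<not> rank_le N ch s' t'"
      using not_rank_le_D[of s N t ch] 1(2,3) by blast
    have "rank_le N ch t s"
    proof (rule rank_le.intros)
      show "t \<in> N" "s \<in> N" using 1 by auto
      show "\<forall>t'. t' \<in> N \<and> ch t t' \<longrightarrow> (\<exists>s''. s'' \<in> N \<and> ch s s'' \<and> rank_le N ch t' s'')"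
      proof (intro allI impI)
        fix t' assume t': "t' \<in> N \<and> ch t t'"
        have "rank_le N ch s' t' \<or> rank_le N ch t' s'" using 1(1)[of s' t'] s' 1(2) t' by blast
        then show "\<exists>s''. s'' \<in> N \<and> ch s s'' \<and> rank_le N ch t' s''" using s' t' by blast
      qed
    qed
    with nn show False by blast
  qed
qed

lemma not_rank_le_E:
  "s \<in> N \<Longrightarrow> t \<in> N \<Longrightarrow> \<not> rank_le N ch s t \<Longrightarrow> \<exists>s'. s' \<in> N \<and> ch s s' \<and> rank_le N ch t s'"
proof (induction t arbitrary: s rule: fwf_induct)
  case (1 t)
  obtain s' where s': "s' \<in> N" "ch s s'" "\<forall>t'. t' \<in> N \<and> ch t t' \<longrightarrow> \<not> rank_le N ch s' t'"
    using not_rank_le_D[of s N t ch] 1(2,3,4) by blast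
  have "rank_le N ch t s'"
  proof (rule rank_le.intros)
    show "t \<in> N" "s' \<in> N" using 1 s' by auto
    show "\<forall>t'. t' \<in> N \<and> ch t t' \<longrightarrow> (\<exists>s''. s'' \<in> N \<and> ch s' s'' \<and> rank_le N ch t' s'')"
    proof (intro allI impI)
      fix t' assume t': "t' \<in> N \<and> ch t t'"
      then have "\<not> rank_le N ch s' t'" using s' by blast
      then show "\<exists>s''. s'' \<in> N \<and> ch s' s'' \<and> rank_le N ch t' s''"
        using 1(1)[of t' s'] t' 1(3) s'(1) by blast
    qed
  qed
  with s' show ?case by blast
qed

lemma wf_ltR: "wf (ltR N ch)"
proof -
  have A: "\<forall>t. rank_le N ch t s \<longrightarrow> t \<in> Wellfounded.acc (ltR N ch)" if "s \<in> N" for s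
    using that
  proof (induction s rule: fwf_induct)
    case (1 s)
    show ?case
    proof (intro allI impI)
      fix t assume ts: "rank_le N ch t s"
      show "t \<in> Wellfounded.acc (ltR N ch)"
      proof (rule acc.accI)
        fix u assume "(u, t) \<in> ltR N ch"
        then have u: "u \<in> N" "rank_le N ch u t" "\<not> rank_le N ch t u" by (simp_all add: ltR_iff)
        have "\<not> rank_le N ch s u"
        proof
          assume "rank_le N ch s u"
          then have "rank_le N ch t u" by (rule rank_le_trans[OF ts])
          then show False using u by blast
        qed
        from not_rank_le_E[OF 1(2) u(1) this] obtain s' where s': "s' \<in> N" "ch s s'" "rank_le N ch u s'"
          by blast
        show "u \<in> Wellfounded.acc (ltR N ch)" using 1(1)[OF s'(1) 1(2) s'(2) s'(1)] s'(3) by blast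
      qed
    qed
  qed
  have "x \<in> Wellfounded.acc (ltR N ch)" for x
  proof (cases "x \<in> N")
    case True then show ?thesis using A[OF True] rank_le_refl[OF True] by simp
  next
    case False show ?thesis by (rule acc.accI) (use False in \<open>simp add: ltR_iff\<close>)
  qed
  then show ?thesis by (simp add: wf_iff_acc)
qed

lemma cls_self: "s \<in> N \<Longrightarrow> s \<in> cls N ch s"
  unfolding cls_def using rank_le_refl by blast

lemma cls_eq_iff: "s \<in> N \<Longrightarrow> t \<in> N \<Longrightarrow> cls N ch s = cls N ch t \<longleftrightarrow> rank_le N ch s t \<and> rank_le N ch t s"
proof
  assume s: "s \<in> N" and t: "t \<in> N" and e: "cls N ch s = cls N ch t"
  have "t \<in> cls N ch s" using e cls_self[OF t] by simp
  then show "rank_le N ch s t \<and> rank_le N ch t s" unfolding cls_def by blast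
next
  assume s: "s \<in> N" and t: "t \<in> N" and r: "rank_le N ch s t \<and> rank_le N ch t s"
  show "cls N ch s = cls N ch t"
  proof (rule set_eqI)
    fix u show "u \<in> cls N ch s \<longleftrightarrow> u \<in> cls N ch t"
      unfolding cls_def using rank_le_trans[of N ch s t u] rank_le_trans[of N ch u s t]
        rank_le_trans[of N ch t s u] rank_le_trans[of N ch u t s] r by blast
  qed
qed

lemma cls_mem: "u \<in> cls N ch s \<Longrightarrow> s \<in> N \<Longrightarrow> cls N ch u = cls N ch s"
  using cls_eq_iff[of u s] unfolding cls_def by blast

lemma forest_inv_iff2: "(C, D) \<in> forest_inv N ch \<longleftrightarrow>
  (\<exists>s t. s \<in> N \<and> t \<in> N \<and> C = cls N ch s \<and> D = cls N ch t \<and> rank_le N ch s t)"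
proof
  assume "(C, D) \<in> forest_inv N ch"
  then obtain s0 t0 s t where st: "s0 \<in> N" "C = cls N ch s0" "t0 \<in> N" "D = cls N ch t0" "s \<in> C" "t \<in> D" "rank_le N ch s t"
    unfolding forest_inv_iff rank_classes_iff by blast
  have "C = cls N ch s" using cls_mem[of s s0] st by simp
  moreover have "D = cls N ch t" using cls_mem[of t t0] st by simp
  ultimately show "\<exists>s t. s \<in> N \<and> t \<in> N \<and> C = cls N ch s \<and> D = cls N ch t \<and> rank_le N ch s t"
    using st(7) rank_le_N[OF st(7)] by blast
next
  assume "\<exists>s t. s \<in> N \<and> t \<in> N \<and> C = cls N ch s \<and> D = cls N ch t \<and> rank_le N ch s t"
  then show "(C, D) \<in> forest_inv N ch"
    unfolding forest_inv_iff rank_classes_iff using cls_self by blast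
qed

lemma cls_le_iff: "s \<in> N \<Longrightarrow> t \<in> N \<Longrightarrow> (cls N ch s, cls N ch t) \<in> forest_inv N ch \<longleftrightarrow> rank_le N ch s t"
proof
  assume s: "s \<in> N" and t: "t \<in> N" and "(cls N ch s, cls N ch t) \<in> forest_inv N ch"
  then obtain s' t' where st: "s' \<in> N" "t' \<in> N" "cls N ch s = cls N ch s'" "cls N ch t = cls N ch t'" "rank_le N ch s' t'"
    unfolding forest_inv_iff2 by blast
  have a: "rank_le N ch s s'" using cls_eq_iff[OF s st(1)] st(3) by blast
  have b: "rank_le N ch t' t" using cls_eq_iff[OF t st(2)] st(4) by blast
  show "rank_le N ch s t" using rank_le_trans[OF rank_le_trans[OF a st(5)] b] .
next
  assume "s \<in> N" "t \<in> N" "rank_le N ch s t"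
  then show "(cls N ch s, cls N ch t) \<in> forest_inv N ch" unfolding forest_inv_iff2 by blast
qed

lemma Field_forest_inv: "Field (forest_inv N ch) = rank_classes N ch"
proof
  show "Field (forest_inv N ch) \<subseteq> rank_classes N ch" by (rule Field_forest_inv_sub)
  show "rank_classes N ch \<subseteq> Field (forest_inv N ch)"
  proof
    fix C assume "C \<in> rank_classes N ch"
    then obtain s where "s \<in> N" "C = cls N ch s" unfolding rank_classes_iff by blast
    then have "(C, C) \<in> forest_inv N ch" using cls_le_iff[of s s] rank_le_refl[of s] by simp
    then show "C \<in> Field (forest_inv N ch)" unfolding Field_def by blast
  qed
qed

lemma Well_order_forest_inv: "Well_order (forest_inv N ch)"
proof -
  let ?F = "forest_inv N ch"
  have fld: "C \<in> Field ?F \<longleftrightarrow> (\<exists>s\<in>N. C = cls N ch s)" for C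
    using Field_forest_inv rank_classes_iff by metis
  have sub: "?F \<subseteq> Field ?F \<times> Field ?F" unfolding Field_def by auto
  have refl: "refl_on (Field ?F) ?F"
    unfolding refl_on_def
  proof
    fix C assume "C \<in> Field ?F"
    then obtain s where "s \<in> N" "C = cls N ch s" using fld by blast
    then show "(C, C) \<in> ?F" using cls_le_iff[of s s] rank_le_refl[of s] by simp
  qed
  have trans: "trans ?F"
    unfolding trans_def
  proof (intro allI impI)
    fix C D E assume CD: "(C, D) \<in> ?F" and DE: "(D, E) \<in> ?F"
    obtain s t where st: "s \<in> N" "t \<in> N" "C = cls N ch s" "D = cls N ch t" "rank_le N ch s t"
      using CD unfolding forest_inv_iff2 by blast
    obtain t' u where tu: "t' \<in> N" "u \<in> N" "D = cls N ch t'" "E = cls N ch u" "rank_le N ch t' u"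
      using DE unfolding forest_inv_iff2 by blast
    have "rank_le N ch t t'" using cls_eq_iff[OF st(2) tu(1)] st(4) tu(3) by simp
    then have "rank_le N ch s u" using rank_le_trans[OF rank_le_trans[OF st(5)] tu(5)] by blast
    then show "(C, E) \<in> ?F" using cls_le_iff[OF st(1) tu(2)] st(3) tu(4) by simp
  qed
  have anti: "antisym ?F"
    unfolding antisym_def
  proof (intro allI impI)
    fix C D assume CD: "(C, D) \<in> ?F" and DC: "(D, C) \<in> ?F"
    obtain s t where st: "s \<in> N" "t \<in> N" "C = cls N ch s" "D = cls N ch t" "rank_le N ch s t"
      using CD unfolding forest_inv_iff2 by blast
    have "rank_le N ch t s" using DC cls_le_iff[OF st(2) st(1)] st(3,4) by simp
    then show "C = D" using cls_eq_iff[OF st(1,2)] st by simp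
  qed
  have total: "total_on (Field ?F) ?F"
    unfolding total_on_def
  proof (intro ballI impI)
    fix C D assume C: "C \<in> Field ?F" and D: "D \<in> Field ?F"
    obtain s where s: "s \<in> N" "C = cls N ch s" using fld[of C] C by blast
    obtain t where t: "t \<in> N" "D = cls N ch t" using fld[of D] D by blast
    have st: "s \<in> N" "t \<in> N" "C = cls N ch s" "D = cls N ch t" using s t by auto
    show "(C, D) \<in> ?F \<or> (D, C) \<in> ?F"
      using rank_le_total[OF st(1,2)] cls_le_iff[OF st(1,2)] cls_le_iff[OF st(2,1)] st(3,4) by blast
  qed
  define rep where "rep C = (SOME s. s \<in> N \<and> C = cls N ch s)" for C
  have wfr: "wf (?F - Id)"
  proof (rule wf_subset)
    show "wf (inv_image (ltR N ch) rep)" using wf_ltR by simp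
    show "?F - Id \<subseteq> inv_image (ltR N ch) rep"
    proof
      fix p assume p: "p \<in> ?F - Id"
      obtain C D where pCD: "p = (C, D)" by (cases p)
      have pF: "(C, D) \<in> ?F" using p pCD by simp
      obtain s t where st: "s \<in> N" "t \<in> N" "C = cls N ch s" "D = cls N ch t" "rank_le N ch s t"
        using pF unfolding forest_inv_iff2 by blast
      have CD: "C \<noteq> D" using p pCD by simp
      have rC: "rep C \<in> N \<and> C = cls N ch (rep C)"
        unfolding rep_def by (rule someI[of _ s]) (use st in simp)
      have rD: "rep D \<in> N \<and> D = cls N ch (rep D)"
        unfolding rep_def by (rule someI[of _ t]) (use st in simp)
      have "rank_le N ch (rep C) (rep D)"
        using cls_le_iff[of "rep C" "rep D"] rC rD st cls_le_iff[OF st(1,2)] by simp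
      moreover have "\<not> rank_le N ch (rep D) (rep C)"
        using cls_eq_iff[of "rep C" "rep D"] rC rD CD calculation by auto
      ultimately show "p \<in> inv_image (ltR N ch) rep" using pCD rC rD by (simp add: ltR_iff)
    qed
  qed
  show ?thesis
    unfolding well_order_on_def linear_order_on_def partial_order_on_def preorder_on_def
    using sub refl trans anti total wfr by blast
qed

lemma simr_self: "s \<in> N \<Longrightarrow> simr (forest_inv N ch) N ch (cls N ch s) s"
proof (induction s rule: wf_induct_rule[OF wf_ltR])
  case (1 s)
  show ?case
  proof (rule simr.intros)
    show "s \<in> N" by fact
    show "\<forall>Y. (Y, cls N ch s) \<in> forest_inv N ch \<and> Y \<noteq> cls N ch s \<longrightarrow>
        (\<exists>t'. t' \<in> N \<and> ch s t' \<and> simr (forest_inv N ch) N ch Y t')"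
    proof (intro allI impI)
      fix Y assume Y: "(Y, cls N ch s) \<in> forest_inv N ch \<and> Y \<noteq> cls N ch s"
      then obtain u s'' where us: "u \<in> N" "s'' \<in> N" "Y = cls N ch u" "cls N ch s = cls N ch s''" "rank_le N ch u s''"
        unfolding forest_inv_iff2 by blast
      have "rank_le N ch s'' s" using cls_eq_iff[OF 1(2) us(2)] us(4) by blast
      then have us2: "rank_le N ch u s" using rank_le_trans[OF us(5)] by blast
      have ns: "\<not> rank_le N ch s u" using cls_eq_iff[OF us(1) 1(2)] us2 Y us(3) by blast
      then have lt: "(u, s) \<in> ltR N ch" using us(1) 1(2) us2 by (simp add: ltR_iff)
      obtain s' where s': "s' \<in> N" "ch s s'" "rank_le N ch u s'" using not_rank_le_E[OF 1(2) us(1) ns] by blast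
      have "simr (forest_inv N ch) N ch (cls N ch u) u" using 1(1)[OF lt us(1)] .
      then have "simr (forest_inv N ch) N ch Y s'" using simr_mono[OF _ s'(3)] us(3) by simp
      then show "\<exists>t'. t' \<in> N \<and> ch s t' \<and> simr (forest_inv N ch) N ch Y t'" using s' by blast
    qed
  qed
qed

lemma simr_ordLeq:
  assumes WO: "Well_order r" and S: "\<forall>x\<in>Field r. \<exists>s. simr r N ch x s"
  shows "(r, forest_inv N ch) \<in> ordLeq"
proof (rule ccontr)
  let ?F = "forest_inv N ch"
  have WF: "Well_order ?F" by (rule Well_order_forest_inv)
  assume "(r, ?F) \<notin> ordLeq"
  then have "(?F, r) \<in> ordLess" using not_ordLeq_iff_ordLess[OF WF WO] by blast
  then obtain h where emb: "embed ?F r h" and nb: "\<not> bij_betw h (Field ?F) (Field r)"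
    unfolding ordLess_def embedS_def by blast
  have comp: "compat ?F r h" by (rule embed_compat[OF emb])
  have inj: "inj_on h (Field ?F)" by (rule embed_inj_on[OF WF emb])
  have ofil: "ofilter r (h ` Field ?F)" using embed_Field_ofilter[OF WF WO emb] by simp
  have sub: "h ` Field ?F \<subseteq> Field r" using ofil unfolding ofilter_def by blast
  have "h ` Field ?F \<noteq> Field r" using nb inj unfolding bij_betw_def by blast
  then obtain a where a: "a \<in> Field r" "a \<notin> h ` Field ?F" using sub by blast
  have below: "(c, a) \<in> r \<and> c \<noteq> a" if c: "c \<in> h ` Field ?F" for c
  proof -
    have cF: "c \<in> Field r" using c sub by blast
    have ca: "c \<noteq> a" using c a by blast
    have tot: "(c, a) \<in> r \<or> (a, c) \<in> r"
      using WO cF a(1) ca unfolding well_order_on_def linear_order_on_def total_on_def by blast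
    have "(a, c) \<notin> r"
    proof
      assume "(a, c) \<in> r"
      then have "a \<in> under r c" unfolding under_def by simp
      then show False using ofil c a(2) unfolding ofilter_def by blast
    qed
    then show ?thesis using tot ca by blast
  qed
  have strict: "(h C', h C) \<in> r \<and> h C' \<noteq> h C" if "s' \<in> N" "s \<in> N" "ch s s'" "C' = cls N ch s'" "C = cls N ch s" for s s' C C'
  proof -
    have le: "rank_le N ch s' s" using rank_le_child that by blast
    have nle: "\<not> rank_le N ch s s'" using not_rank_le_child that by blast
    have "(C', C) \<in> ?F" using cls_le_iff[of s' s] le that by simp
    moreover have "C' \<noteq> C" using cls_eq_iff[of s' s] nle that by simp
    moreover have "C \<in> Field ?F" "C' \<in> Field ?F"
      using that by (auto simp: Field_forest_inv rank_classes_iff)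
    ultimately show ?thesis using comp inj unfolding compat_def inj_on_def by blast
  qed
  have K: "\<forall>t. simr r N ch (h (cls N ch s)) t \<longrightarrow> rank_le N ch s t" if "s \<in> N" for s
    using that
  proof (induction s rule: wf_induct_rule[OF wf_ltR])
    case (1 s)
    show ?case
    proof (intro allI impI)
      fix t assume t: "simr r N ch (h (cls N ch s)) t"
      show "rank_le N ch s t"
      proof (rule rank_le.intros)
        show "s \<in> N" by fact
        show "t \<in> N" using simr_N[OF t] .
        show "\<forall>s'. s' \<in> N \<and> ch s s' \<longrightarrow> (\<exists>t'. t' \<in> N \<and> ch t t' \<and> rank_le N ch s' t')"
        proof (intro allI impI)
          fix s' assume s': "s' \<in> N \<and> ch s s'"
          have st: "(h (cls N ch s'), h (cls N ch s)) \<in> r \<and> h (cls N ch s') \<noteq> h (cls N ch s)"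
            using strict[of s' s] s' 1(2) by blast
          obtain t' where t': "t' \<in> N" "ch t t'" "simr r N ch (h (cls N ch s')) t'"
            using simr_D[OF t] st by blast
          have lt: "(s', s) \<in> ltR N ch"
            using s' 1(2) rank_le_child[of s s'] not_rank_le_child[of s s'] by (simp add: ltR_iff)
          have "rank_le N ch s' t'" using 1(1)[OF lt] s' t'(3) by blast
          then show "\<exists>t'. t' \<in> N \<and> ch t t' \<and> rank_le N ch s' t'" using t' by blast
        qed
      qed
    qed
  qed
  obtain s0 where s0: "simr r N ch a s0" using S a(1) by blast
  have s0N: "s0 \<in> N" using simr_N[OF s0] .
  have "cls N ch s0 \<in> Field ?F" using s0N by (auto simp: Field_forest_inv rank_classes_iff)
  then have "(h (cls N ch s0), a) \<in> r \<and> h (cls N ch s0) \<noteq> a" using below by blast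
  then obtain t where t: "t \<in> N" "ch s0 t" "simr r N ch (h (cls N ch s0)) t"
    using simr_D[OF s0] by blast
  have "rank_le N ch s0 t" using K[OF s0N] t(3) by blast
  then show False using not_rank_le_child[OF s0N t(1,2)] by blast
qed


end




lemma wqo_homog:
  fixes g :: "nat \<Rightarrow> 'a" assumes W: "wqo_on A le" and Z: "infinite Z" and g: "\<forall>i\<in>Z. g i \<in> A"
  shows "\<exists>Y\<subseteq>Z. infinite Y \<and> (\<forall>i\<in>Y. \<forall>j\<in>Y. i < j \<longrightarrow> le (g i) (g j))"
proof -
  define c where "c X = (if le (g (Min X)) (g (Max X)) then 1 else (0::nat))" for X :: "nat set"
  have "\<forall>x\<in>Z. \<forall>y\<in>Z. x \<noteq> y \<longrightarrow> c {x, y} < 2" unfolding c_def by simp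
  then obtain Y t where Y: "Y \<subseteq> Z" "infinite Y" "t < 2" "\<forall>x\<in>Y. \<forall>y\<in>Y. x \<noteq> y \<longrightarrow> c {x, y} = t"
    using Ramsey2[OF Z, of c 2] by blast
  have cxy: "c {x, y} = (if le (g x) (g y) then 1 else 0)" if "x < y" for x y
    using that unfolding c_def by (simp add: min_def max_def)
  have "t = 1"
  proof (rule ccontr)
    assume "t \<noteq> 1"
    then have t0: "t = 0" using Y(3) by simp
    define h where "h k = g (enumerate Y k)" for k
    have "\<forall>k. h k \<in> A" unfolding h_def using enumerate_in_set[OF Y(2)] Y(1) g by blast
    then obtain i j where ij: "i < j" "le (h i) (h j)" using W unfolding wqo_on_def by blast
    have lt: "enumerate Y i < enumerate Y j" using enumerate_mono[OF ij(1) Y(2)] .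
    have inY: "enumerate Y i \<in> Y" "enumerate Y j \<in> Y" using enumerate_in_set[OF Y(2)] by auto
    have "c {enumerate Y i, enumerate Y j} = 1" using cxy[OF lt] ij(2) unfolding h_def by simp
    moreover have "c {enumerate Y i, enumerate Y j} = t" using Y(4) inY lt by auto
    ultimately show False using t0 by simp
  qed
  have "\<forall>i\<in>Y. \<forall>j\<in>Y. i < j \<longrightarrow> le (g i) (g j)"
  proof (intro ballI impI)
    fix i j assume ij: "i \<in> Y" "j \<in> Y" "i < j"
    have c1: "c {i, j} = 1" using Y(4) \<open>t = 1\<close> ij by auto
    show "le (g i) (g j)"
    proof (rule ccontr)
      assume "\<not> le (g i) (g j)"
      then have "c {i, j} = 0" using cxy[OF ij(3)] by simp
      then show False using c1 by simp
    qed
  qed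
  then show ?thesis using Y(1,2) by blast
qed

lemma wqo_prod_good:
  fixes e :: "nat \<Rightarrow> 'a \<times> 'b"
  assumes WA: "wqo_on A leA" and WB: "wqo_on B leB" and e: "\<forall>i. e i \<in> A \<times> B"
  shows "\<exists>i j. i < j \<and> prod_le leA leB (e i) (e j)"
proof -
  obtain Y1 where Y1: "infinite Y1" "\<forall>i\<in>Y1. \<forall>j\<in>Y1. i < j \<longrightarrow> leA (fst (e i)) (fst (e j))"
    using wqo_homog[OF WA, of UNIV "\<lambda>i. fst (e i)"] e infinite_UNIV_nat by (auto simp: mem_Times_iff)
  obtain Y2 where Y2: "Y2 \<subseteq> Y1" "infinite Y2" "\<forall>i\<in>Y2. \<forall>j\<in>Y2. i < j \<longrightarrow> leB (snd (e i)) (snd (e j))"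
    using wqo_homog[OF WB Y1(1), of "\<lambda>i. snd (e i)"] e by (auto simp: mem_Times_iff)
  have "enumerate Y2 0 < enumerate Y2 1" using enumerate_mono[OF _ Y2(2)] by simp
  moreover have "enumerate Y2 0 \<in> Y2" "enumerate Y2 1 \<in> Y2" using enumerate_in_set[OF Y2(2)] by auto
  ultimately show ?thesis using Y1(2) Y2 unfolding prod_le_def by blast
qed




lemma ext_chain_eq:
  assumes "\<forall>i. extends1 (f i) (f (Suc i))"
  shows "f j = f 0 @ map (\<lambda>k. f (Suc k) ! (length (f 0) + k)) [0..<j]"
proof (induction j)
  case 0 then show ?case by simp
next
  case (Suc j)
  obtain x where x: "f (Suc j) = f j @ [x]" using assms unfolding extends1_def by blast
  have len: "length (f j) = length (f 0) + j" using Suc by simp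
  have "f (Suc j) ! (length (f 0) + j) = x" using x len by (simp add: nth_append)
  then show ?case using x Suc by simp
qed

lemma ext_chain_nth:
  assumes "\<forall>i. extends1 (f i) (f (Suc i))" and "i < n"
  shows "f n ! (length (f 0) + i) = f (Suc i) ! (length (f 0) + i)"
    and "length (f 0) + i < length (f n)"
proof -
  have "f n = f 0 @ map (\<lambda>k. f (Suc k) ! (length (f 0) + k)) [0..<n]" by (rule ext_chain_eq[OF assms(1)])
  then show "f n ! (length (f 0) + i) = f (Suc i) ! (length (f 0) + i)"
    and "length (f 0) + i < length (f n)" using assms(2) by (simp_all add: nth_append)
qed

lemma fwf_extends1:
  assumes "\<And>f. \<forall>i. f i \<in> N \<and> extends1 (f i) (f (Suc i)) \<Longrightarrow> False"
  shows "fwf N extends1"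
  unfolding fwf_def wf_iff_no_infinite_down_chain using assms by blast

lemma fwf_antichain:
  assumes W: "wqo_on A le" and sub: "A' \<subseteq> A"
  shows "fwf (antichain_seqs A' le) extends1"
proof (rule fwf_extends1)
  fix f assume f: "\<forall>i. f i \<in> antichain_seqs A' le \<and> extends1 (f i) (f (Suc i))"
  then have ch: "\<forall>i. extends1 (f i) (f (Suc i))" by blast
  define L where "L = length (f 0)"
  define e where "e k = f (Suc k) ! (L + k)" for k
  have eA: "e k \<in> A" for k
  proof -
    have "L + k < length (f (Suc k))" using ext_chain_nth(2)[OF ch, of k "Suc k"] unfolding L_def by simp
    then have "e k \<in> set (f (Suc k))" unfolding e_def by simp
    then show ?thesis using f sub unfolding antichain_seqs_def by blast
  qed
  obtain i j where ij: "i < j" "le (e i) (e j)" using W eA unfolding wqo_on_def by blast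
  have a: "f (Suc j) ! (L + i) = e i" "f (Suc j) ! (L + j) = e j"
    using ext_chain_nth(1)[OF ch, of i "Suc j"] ext_chain_nth(1)[OF ch, of j "Suc j"] ij(1)
    unfolding e_def L_def by simp_all
  have "L + j < length (f (Suc j))" using ext_chain_nth(2)[OF ch, of j "Suc j"] unfolding L_def by simp
  moreover have "L + i < L + j" using ij(1) by simp
  ultimately have "incomparable le (f (Suc j) ! (L + i)) (f (Suc j) ! (L + j))"
    using f unfolding antichain_seqs_def by blast
  then show False using a ij(2) unfolding incomparable_def by simp
qed

lemma fwf_bad:
  assumes W: "wqo_on A le"
  shows "fwf (bad_seqs A le) extends1"
proof (rule fwf_extends1)
  fix f assume f: "\<forall>i. f i \<in> bad_seqs A le \<and> extends1 (f i) (f (Suc i))"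
  then have ch: "\<forall>i. extends1 (f i) (f (Suc i))" by blast
  define L where "L = length (f 0)"
  define e where "e k = f (Suc k) ! (L + k)" for k
  have eA: "e k \<in> A" for k
  proof -
    have "L + k < length (f (Suc k))" using ext_chain_nth(2)[OF ch, of k "Suc k"] unfolding L_def by simp
    then have "e k \<in> set (f (Suc k))" unfolding e_def by simp
    then show ?thesis using f unfolding bad_seqs_def by blast
  qed
  obtain i j where ij: "i < j" "le (e i) (e j)" using W eA unfolding wqo_on_def by blast
  have a: "f (Suc j) ! (L + i) = e i" "f (Suc j) ! (L + j) = e j"
    using ext_chain_nth(1)[OF ch, of i "Suc j"] ext_chain_nth(1)[OF ch, of j "Suc j"] ij(1)
    unfolding e_def L_def by simp_all
  have "L + j < length (f (Suc j))" using ext_chain_nth(2)[OF ch, of j "Suc j"] unfolding L_def by simp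
  moreover have "L + i < L + j" using ij(1) by simp
  ultimately have "\<not> le (f (Suc j) ! (L + i)) (f (Suc j) ! (L + j))"
    using f unfolding bad_seqs_def by blast
  then show False using a ij(2) by simp
qed

lemma fwf_prod:
  assumes WA: "wqo_on A leA" and WB: "wqo_on B leB"
  shows "fwf (antichain_seqs (A \<times> B) (prod_le leA leB)) extends1"
proof (rule fwf_extends1)
  fix f assume f: "\<forall>i. f i \<in> antichain_seqs (A \<times> B) (prod_le leA leB) \<and> extends1 (f i) (f (Suc i))"
  then have ch: "\<forall>i. extends1 (f i) (f (Suc i))" by blast
  define L where "L = length (f 0)"
  define e where "e k = f (Suc k) ! (L + k)" for k
  have eA: "\<forall>k. e k \<in> A \<times> B"
  proof
    fix k
    have "L + k < length (f (Suc k))" using ext_chain_nth(2)[OF ch, of k "Suc k"] unfolding L_def by simp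
    then have "e k \<in> set (f (Suc k))" unfolding e_def by simp
    then show "e k \<in> A \<times> B" using f unfolding antichain_seqs_def by blast
  qed
  obtain i j where ij: "i < j" "prod_le leA leB (e i) (e j)" using wqo_prod_good[OF WA WB eA] by blast
  have a: "f (Suc j) ! (L + i) = e i" "f (Suc j) ! (L + j) = e j"
    using ext_chain_nth(1)[OF ch, of i "Suc j"] ext_chain_nth(1)[OF ch, of j "Suc j"] ij(1)
    unfolding e_def L_def by simp_all
  have "L + j < length (f (Suc j))" using ext_chain_nth(2)[OF ch, of j "Suc j"] unfolding L_def by simp
  moreover have "L + i < L + j" using ij(1) by simp
  ultimately have "incomparable (prod_le leA leB) (f (Suc j) ! (L + i)) (f (Suc j) ! (L + j))"
    using f unfolding antichain_seqs_def by blast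
  then show False using a ij(2) unfolding incomparable_def by simp
qed


lemma antichain_snoc:
  assumes "xs \<in> antichain_seqs A le \<or> xs = []" "x \<in> A" "\<forall>y\<in>set xs. incomparable le y x"
  shows "xs @ [x] \<in> antichain_seqs A le"
  unfolding antichain_seqs_def
proof (intro CollectI conjI allI impI)
  show "xs @ [x] \<noteq> []" by simp
  show "set (xs @ [x]) \<subseteq> A" using assms unfolding antichain_seqs_def by auto
  fix i j assume ij: "i < j \<and> j < length (xs @ [x])"
  show "incomparable le ((xs @ [x]) ! i) ((xs @ [x]) ! j)"
  proof (cases "j < length xs")
    case True
    then show ?thesis using ij assms(1) unfolding antichain_seqs_def by (auto simp: nth_append)
  next
    case False
    then have "j = length xs" using ij by simp
    moreover have "xs ! i \<in> set xs" using ij calculation by simp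
    ultimately show ?thesis using ij assms(3) by (simp add: nth_append)
  qed
qed

lemma antichain_snoc_D:
  assumes "xs @ [x] \<in> antichain_seqs A le"
  shows "x \<in> A" "\<forall>y\<in>set xs. incomparable le y x"
proof -
  show "x \<in> A" using assms unfolding antichain_seqs_def by auto
  show "\<forall>y\<in>set xs. incomparable le y x"
  proof
    fix y assume "y \<in> set xs"
    then obtain i where i: "i < length xs" "xs ! i = y" by (auto simp: in_set_conv_nth)
    have "\<forall>i j. i < j \<and> j < length (xs @ [x]) \<longrightarrow> incomparable le ((xs @ [x]) ! i) ((xs @ [x]) ! j)"
      using assms unfolding antichain_seqs_def by blast
    then have "incomparable le ((xs @ [x]) ! i) ((xs @ [x]) ! length xs)"
      using i by (metis length_append_singleton lessI)
    then show "incomparable le y x" using i by (simp add: nth_append)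
  qed
qed

lemma antichain_take:
  assumes "xs \<in> antichain_seqs A le" "0 < k"
  shows "take k xs \<in> antichain_seqs A le"
  using assms unfolding antichain_seqs_def
  by (auto dest: in_set_takeD)

lemma bad_snoc_D:
  assumes "xs @ [x] \<in> bad_seqs A le" "y \<in> set xs"
  shows "\<not> le y x"
proof -
  obtain i where i: "i < length xs" "xs ! i = y" using assms(2) by (auto simp: in_set_conv_nth)
  have "\<forall>i j. i < j \<and> j < length (xs @ [x]) \<longrightarrow> \<not> le ((xs @ [x]) ! i) ((xs @ [x]) ! j)"
    using assms unfolding bad_seqs_def by blast
  then have "\<not> le ((xs @ [x]) ! i) ((xs @ [x]) ! length xs)"
    using i by (metis length_append_singleton lessI)
  then show ?thesis using i by (simp add: nth_append)
qed

lemma bad_butlast_D: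
  assumes "xs \<in> bad_seqs A le" "y \<in> set (butlast xs)"
  shows "\<not> le y (last xs)"
proof -
  have "xs \<noteq> []" using assms unfolding bad_seqs_def by auto
  then have "butlast xs @ [last xs] \<in> bad_seqs A le" using assms(1) by simp
  then show ?thesis using bad_snoc_D[OF _ assms(2)] by blast
qed

lemma prefix_rank:
  assumes W: "wfforest (antichain_seqs A le) extends1"
  shows "u \<in> antichain_seqs A le \<Longrightarrow> 0 < k \<Longrightarrow> k \<le> length u \<Longrightarrow>
    rank_le (antichain_seqs A le) extends1 u (take k u)"
proof (induction u arbitrary: k rule: wfforest.fwf_induct[OF W])
  case (1 u)
  let ?N = "antichain_seqs A le"
  have tk: "take k u \<in> ?N" using antichain_take[OF 1(2,3)] .
  show ?case
  proof (rule rank_le.intros)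
    show "u \<in> ?N" "take k u \<in> ?N" by fact+
    show "\<forall>s'. s' \<in> ?N \<and> extends1 u s' \<longrightarrow> (\<exists>t'. t' \<in> ?N \<and> extends1 (take k u) t' \<and> rank_le ?N extends1 s' t')"
    proof (intro allI impI)
      fix s' assume s': "s' \<in> ?N \<and> extends1 u s'"
      then obtain x where x: "s' = u @ [x]" unfolding extends1_def by blast
      show "\<exists>t'. t' \<in> ?N \<and> extends1 (take k u) t' \<and> rank_le ?N extends1 s' t'"
      proof (cases "k = length u")
        case True
        then have "take k u = u" by simp
        moreover have "rank_le ?N extends1 s' s'" using wfforest.rank_le_refl[OF W] s' by blast
        ultimately show ?thesis using s' by auto
      next
        case False
        then have kl: "k < length u" using 1(4) by simp
        have e: "take (Suc k) s' = take (Suc k) u" using x kl by simp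
        have "take (Suc k) u = take k u @ [u ! k]" using kl by (simp add: take_Suc_conv_app_nth)
        then have ext: "extends1 (take k u) (take (Suc k) s')" using e unfolding extends1_def by simp
        have mem: "take (Suc k) s' \<in> ?N" using antichain_take[of s' A le "Suc k"] s' by simp
        have "rank_le ?N extends1 s' (take (Suc k) s')"
          using 1(1)[of s' "Suc k"] s' 1(2) x kl by simp
        then show ?thesis using ext mem by blast
      qed
    qed
  qed
qed




lemma wo_facts:
  assumes "Well_order r"
  shows "\<And>a. a \<in> Field r \<Longrightarrow> (a, a) \<in> r" "trans r" "antisym r" "total_on (Field r) r" "wf (r - Id)"
  using assms unfolding well_order_on_def linear_order_on_def partial_order_on_def preorder_on_def refl_on_def
  by blast+

lemma ord_mult_mem: "((a, b), (a', b')) \<in> ord_mult r s \<longleftrightarrow> a \<in> Field r \<and> a' \<in> Field r \<and> b \<in> Field s \<and> b' \<in> Field s \<and>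
      (((b, b') \<in> s \<and> b \<noteq> b') \<or> (b = b' \<and> (a, a') \<in> r))"
  unfolding ord_mult_def by simp

lemma Well_order_ord_mult:
  assumes R: "Well_order r" and S: "Well_order s"
  shows "Well_order (ord_mult r s)"
proof -
  let ?M = "ord_mult r s"
  note r = wo_facts[OF R] and s = wo_facts[OF S]
  have fld: "Field ?M = Field r \<times> Field s"
  proof
    show "Field ?M \<subseteq> Field r \<times> Field s"
      unfolding Field_def ord_mult_def by auto
    show "Field r \<times> Field s \<subseteq> Field ?M"
    proof
      fix p assume "p \<in> Field r \<times> Field s"
      then obtain a b where p: "p = (a, b)" "a \<in> Field r" "b \<in> Field s" by blast
      then have "(p, p) \<in> ?M" using r(1)[of a] by (simp add: ord_mult_mem)
      then show "p \<in> Field ?M" unfolding Field_def by blast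
    qed
  qed
  have refl: "refl_on (Field ?M) ?M"
    unfolding refl_on_def fld
  proof
    fix p assume "p \<in> Field r \<times> Field s"
    then obtain a b where p: "p = (a, b)" "a \<in> Field r" "b \<in> Field s" by blast
    then show "(p, p) \<in> ?M" using r(1)[of a] by (simp add: ord_mult_mem)
  qed
  have trans: "trans ?M"
    unfolding trans_def
  proof (intro allI impI)
    fix p q u assume pq: "(p, q) \<in> ?M" and qu: "(q, u) \<in> ?M"
    obtain a b where p: "p = (a, b)" by (cases p)
    obtain a' b' where q: "q = (a', b')" by (cases q)
    obtain a'' b'' where u: "u = (a'', b'')" by (cases u)
    have 1: "a \<in> Field r" "a' \<in> Field r" "b \<in> Field s" "b' \<in> Field s"
        "((b, b') \<in> s \<and> b \<noteq> b') \<or> (b = b' \<and> (a, a') \<in> r)"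
      using pq p q by (simp_all add: ord_mult_mem)
    have 2: "a'' \<in> Field r" "b'' \<in> Field s"
        "((b', b'') \<in> s \<and> b' \<noteq> b'') \<or> (b' = b'' \<and> (a', a'') \<in> r)"
      using qu q u by (simp_all add: ord_mult_mem)
    have "((b, b'') \<in> s \<and> b \<noteq> b'') \<or> (b = b'' \<and> (a, a'') \<in> r)"
    proof (cases "b = b'")
      case True
      show ?thesis
      proof (cases "b' = b''")
        case True
        then have "(a, a'') \<in> r" using 1(5) 2(3) \<open>b = b'\<close> r(2) unfolding trans_def by blast
        then show ?thesis using True \<open>b = b'\<close> by simp
      next
        case False
        then show ?thesis using 2(3) True by simp
      qed
    next
      case False
      then have bb': "(b, b') \<in> s" using 1(5) by simp
      show ?thesis
      proof (cases "b' = b''")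
        case True
        then show ?thesis using bb' False by simp
      next
        case False2: False
        then have b'b'': "(b', b'') \<in> s" using 2(3) by simp
        have bb'': "(b, b'') \<in> s" using bb' b'b'' s(2) unfolding trans_def by blast
        have "b \<noteq> b''"
        proof
          assume "b = b''"
          then have "(b', b) \<in> s" using b'b'' by simp
          then show False using bb' False s(3) unfolding antisym_def by blast
        qed
        then show ?thesis using bb'' by simp
      qed
    qed
    then show "(p, u) \<in> ?M" using p u 1 2 by (simp add: ord_mult_mem)
  qed
  have anti: "antisym ?M"
    unfolding antisym_def
  proof (intro allI impI)
    fix p q assume pq: "(p, q) \<in> ?M" and qp: "(q, p) \<in> ?M"
    obtain a b where p: "p = (a, b)" by (cases p)
    obtain a' b' where q: "q = (a', b')" by (cases q)
    have 1: "((b, b') \<in> s \<and> b \<noteq> b') \<or> (b = b' \<and> (a, a') \<in> r)"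
      using pq p q by (simp add: ord_mult_mem)
    have 2: "((b', b) \<in> s \<and> b' \<noteq> b) \<or> (b' = b \<and> (a', a) \<in> r)"
      using qp p q by (simp add: ord_mult_mem)
    have "b = b'" using 1 2 s(3) unfolding antisym_def by blast
    moreover have "a = a'" using 1 2 r(3) calculation unfolding antisym_def by blast
    ultimately show "p = q" using p q by simp
  qed
  have total: "total_on (Field ?M) ?M"
    unfolding total_on_def fld
  proof (intro ballI impI)
    fix p q assume pF: "p \<in> Field r \<times> Field s" and qF: "q \<in> Field r \<times> Field s" and pq: "p \<noteq> q"
    obtain a b where p: "p = (a, b)" "a \<in> Field r" "b \<in> Field s" using pF by blast
    obtain a' b' where q: "q = (a', b')" "a' \<in> Field r" "b' \<in> Field s" using qF by blast
    show "(p, q) \<in> ?M \<or> (q, p) \<in> ?M"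
    proof (cases "b = b'")
      case True
      then have "a \<noteq> a'" using pq p q by simp
      then have "(a, a') \<in> r \<or> (a', a) \<in> r" using r(4) p q unfolding total_on_def by blast
      then show ?thesis using p q True by (auto simp: ord_mult_mem)
    next
      case False
      then have "(b, b') \<in> s \<or> (b', b) \<in> s" using s(4) p q unfolding total_on_def by blast
      then show ?thesis using p q False by (auto simp: ord_mult_mem)
    qed
  qed
  have sub: "?M \<subseteq> Field ?M \<times> Field ?M" unfolding Field_def by auto
  have wfM: "wf (?M - Id)"
  proof (rule wf_subset)
    show "wf (inv_image ((s - Id) <*lex*> (r - Id)) (\<lambda>(a, b). (b, a)))"
      using wf_lex_prod[OF s(5) r(5)] by simp
    show "?M - Id \<subseteq> inv_image ((s - Id) <*lex*> (r - Id)) (\<lambda>(a, b). (b, a))"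
    proof
      fix z assume z: "z \<in> ?M - Id"
      obtain a b a' b' where zz: "z = ((a, b), (a', b'))" by (cases z) auto
      have 1: "((b, b') \<in> s \<and> b \<noteq> b') \<or> (b = b' \<and> (a, a') \<in> r)" "(a, b) \<noteq> (a', b')"
        using z zz by (simp_all add: ord_mult_mem)
      then show "z \<in> inv_image ((s - Id) <*lex*> (r - Id)) (\<lambda>(a, b). (b, a))"
        using zz by auto
    qed
  qed
  show ?thesis
    unfolding well_order_on_def linear_order_on_def partial_order_on_def preorder_on_def
    using sub refl trans anti total wfM by blast
qed




lemma not_below_sub: "not_below A le Y \<subseteq> A"
  unfolding not_below_def by auto

lemma not_below_empty: "not_below A le {} = A"
  unfolding not_below_def by auto

lemma wfforest_antichain: "wqo_on A le \<Longrightarrow> A' \<subseteq> A \<Longrightarrow> wfforest (antichain_seqs A' le) extends1"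
  using fwf_antichain unfolding wfforest_def by blast

lemma wfforest_bad: "wqo_on A le \<Longrightarrow> wfforest (bad_seqs A le) extends1"
  using fwf_bad unfolding wfforest_def by blast

lemma transfer_get:
  assumes WA: "wqo_on A leA" and TA: "transferable A leA" and Y: "finite Y" "Y \<subseteq> A"
    and C: "C \<in> Field (width A leA)"
  shows "\<exists>a. a \<in> not_below A leA Y \<and>
    simr (width A leA) (antichain_seqs (not_below A leA Y) leA) extends1 C [a]"
proof -
  let ?A2 = "not_below A leA Y"
  let ?N2 = "antichain_seqs ?A2 leA"
  have W2: "wfforest ?N2 extends1" using wfforest_antichain[OF WA not_below_sub] .
  have "(width ?A2 leA, width A leA) \<in> ordIso" using TA Y unfolding transferable_def by blast
  then have "(width A leA, width ?A2 leA) \<in> ordIso" by (rule ordIso_symmetric)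
  then obtain g where WO: "Well_order (width A leA)" and iso: "iso (width A leA) (width ?A2 leA) g"
    unfolding ordIso_def by blast
  have emb: "embed (width A leA) (width ?A2 leA) g" and bij: "bij_betw g (Field (width A leA)) (Field (width ?A2 leA))"
    using iso unfolding iso_def by blast+
  have comp: "compat (width A leA) (width ?A2 leA) g" by (rule embed_compat[OF emb])
  have inj: "inj_on g (Field (width A leA))" by (rule embed_inj_on[OF WO emb])
  have mono: "\<forall>x y. (y, x) \<in> width A leA \<and> y \<noteq> x \<longrightarrow> (g y, g x) \<in> width ?A2 leA \<and> g y \<noteq> g x"
  proof (intro allI impI)
    fix x y assume yx: "(y, x) \<in> width A leA \<and> y \<noteq> x"
    have "y \<in> Field (width A leA)" "x \<in> Field (width A leA)" using yx unfolding Field_def by blast+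
    then show "(g y, g x) \<in> width ?A2 leA \<and> g y \<noteq> g x"
      using yx comp inj unfolding compat_def inj_on_def by blast
  qed
  have "g C \<in> Field (width ?A2 leA)" using bij C unfolding bij_betw_def by blast
  then have "g C \<in> rank_classes ?N2 extends1"
    unfolding width_def using wfforest.Field_forest_inv[OF W2] by simp
  then obtain s where s: "s \<in> ?N2" "g C = cls ?N2 extends1 s" unfolding rank_classes_iff by blast
  have "simr (width ?A2 leA) ?N2 extends1 (g C) s"
    unfolding width_def using wfforest.simr_self[OF W2 s(1)] s(2) by simp
  then have sC: "simr (width A leA) ?N2 extends1 C s" by (rule simr_transfer[OF mono])
  have sne: "s \<noteq> []" using s(1) unfolding antichain_seqs_def by blast
  then have "0 < length s" by simp
  then have "rank_le ?N2 extends1 s (take 1 s)" using prefix_rank[OF W2 s(1), of 1] sne by (simp add: Suc_le_eq)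
  moreover have "take 1 s = [hd s]" using sne by (cases s) auto
  ultimately have "simr (width A leA) ?N2 extends1 C [hd s]" using simr_mono[OF sC] by simp
  moreover have "hd s \<in> ?A2" using s(1) sne unfolding antichain_seqs_def by (cases s) auto
  ultimately show ?thesis by blast
qed

lemma map_pair_antichain:
  assumes "\<sigma> \<in> antichain_seqs A leA" "b \<in> B" "leB b b"
  shows "map (\<lambda>a. (a, b)) \<sigma> \<in> antichain_seqs (A \<times> B) (prod_le leA leB)"
  using assms unfolding antichain_seqs_def incomparable_def prod_le_def by auto




lemma main_claim:
  assumes WA: "wqo_on A leA" and TA: "transferable A leA" and WB: "wqo_on B leB"
    and wfr: "wf (ord_mult (width A leA) (mot B leB) - Id)"
  shows "\<beta> \<in> bad_seqs B leB \<Longrightarrow> \<sigma> \<in> antichain_seqs (not_below A leA (fst ` set \<pi>0)) leA \<Longrightarrow>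
    snd ` set \<pi>0 \<subseteq> set (butlast \<beta>) \<Longrightarrow>
    \<pi>0 @ map (\<lambda>a. (a, last \<beta>)) \<sigma> \<in> antichain_seqs (A \<times> B) (prod_le leA leB) \<Longrightarrow>
    simr (width A leA) (antichain_seqs (not_below A leA (fst ` set \<pi>0)) leA) extends1 (fst x) \<sigma> \<Longrightarrow>
    simr (mot B leB) (bad_seqs B leB) extends1 (snd x) \<beta> \<Longrightarrow>
    simr (ord_mult (width A leA) (mot B leB)) (antichain_seqs (A \<times> B) (prod_le leA leB)) extends1 x
      (\<pi>0 @ map (\<lambda>a. (a, last \<beta>)) \<sigma>)"
proof (induction x arbitrary: \<pi>0 \<beta> \<sigma> rule: wf_induct_rule[OF wfr])
  case (1 x)
  let ?r = "ord_mult (width A leA) (mot B leB)"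
  let ?NP = "antichain_seqs (A \<times> B) (prod_le leA leB)"
  let ?NA = "antichain_seqs (not_below A leA (fst ` set \<pi>0)) leA"
  let ?\<pi> = "\<pi>0 @ map (\<lambda>a. (a, last \<beta>)) \<sigma>"
  obtain C D where x: "x = (C, D)" by (cases x)
  have sA: "simr (width A leA) ?NA extends1 C \<sigma>" using 1(6) x by simp
  have sB: "simr (mot B leB) (bad_seqs B leB) extends1 D \<beta>" using 1(7) x by simp
  have bne: "\<beta> \<noteq> []" using 1(2) unfolding bad_seqs_def by blast
  have lastB: "last \<beta> \<in> B" using 1(2) bne unfolding bad_seqs_def by auto
  have sndpi: "snd ` set ?\<pi> \<subseteq> set \<beta>"
  proof -
    have "snd ` set \<pi>0 \<subseteq> set \<beta>" using 1(4) in_set_butlastD by fastforce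
    moreover have "last \<beta> \<in> set \<beta>" using bne by simp
    ultimately show ?thesis by auto
  qed
  have piAB: "set ?\<pi> \<subseteq> A \<times> B" using 1(5) unfolding antichain_seqs_def by blast
  show ?case
  proof (rule simr.intros)
    show "?\<pi> \<in> ?NP" by fact
    show "\<forall>y. (y, x) \<in> ?r \<and> y \<noteq> x \<longrightarrow> (\<exists>t'. t' \<in> ?NP \<and> extends1 ?\<pi> t' \<and> simr ?r ?NP extends1 y t')"
    proof (intro allI impI)
      fix y assume y: "(y, x) \<in> ?r \<and> y \<noteq> x"
      obtain C' D' where yy: "y = (C', D')" by (cases y)
      have yx: "C' \<in> Field (width A leA)" "C \<in> Field (width A leA)" "D' \<in> Field (mot B leB)" "D \<in> Field (mot B leB)"
        "((D', D) \<in> mot B leB \<and> D' \<noteq> D) \<or> (D' = D \<and> (C', C) \<in> width A leA)"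
        using y x yy by (simp_all add: ord_mult_mem)
      have yr: "(y, x) \<in> ?r - Id" using y by simp
      show "\<exists>t'. t' \<in> ?NP \<and> extends1 ?\<pi> t' \<and> simr ?r ?NP extends1 y t'"
      proof (cases "D' = D")
        case True
        then have CC: "(C', C) \<in> width A leA" "C' \<noteq> C" using yx y x yy by auto
        obtain \<sigma>' where s': "\<sigma>' \<in> ?NA" "extends1 \<sigma> \<sigma>'" "simr (width A leA) ?NA extends1 C' \<sigma>'"
          using simr_D[OF sA CC] by blast
        obtain a where a: "\<sigma>' = \<sigma> @ [a]" using s'(2) unfolding extends1_def by blast
        have aA: "a \<in> not_below A leA (fst ` set \<pi>0)" using antichain_snoc_D(1)[of \<sigma> a] s'(1) a by simp
        have ainc: "\<forall>z\<in>set \<sigma>. incomparable leA z a" using antichain_snoc_D(2)[of \<sigma> a] s'(1) a by simp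
        have inc: "\<forall>z\<in>set ?\<pi>. incomparable (prod_le leA leB) z (a, last \<beta>)"
        proof
          fix z assume z: "z \<in> set ?\<pi>"
          obtain za zb where zz: "z = (za, zb)" by (cases z)
          show "incomparable (prod_le leA leB) z (a, last \<beta>)"
          proof (cases "z \<in> set \<pi>0")
            case True
            then have "zb \<in> set (butlast \<beta>)" using 1(4) zz by force
            then have nb: "\<not> leB zb (last \<beta>)" using bad_butlast_D[OF 1(2)] by blast
            have "za \<in> fst ` set \<pi>0" using True zz by force
            then have na: "\<not> leA a za" using aA unfolding not_below_def by blast
            show ?thesis using nb na zz unfolding incomparable_def prod_le_def by simp
          next
            case False
            then have "z \<in> set (map (\<lambda>a. (a, last \<beta>)) \<sigma>)" using z by simp
            then have "za \<in> set \<sigma>" "zb = last \<beta>" using zz by auto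
            then have "incomparable leA za a" using ainc by blast
            then show ?thesis using zz unfolding incomparable_def prod_le_def by simp
          qed
        qed
        have aAB: "(a, last \<beta>) \<in> A \<times> B" using aA lastB not_below_sub[of A leA "fst ` set \<pi>0"] by blast
        have eq: "\<pi>0 @ map (\<lambda>a. (a, last \<beta>)) \<sigma>' = ?\<pi> @ [(a, last \<beta>)]" using a by simp
        have mem: "\<pi>0 @ map (\<lambda>a. (a, last \<beta>)) \<sigma>' \<in> ?NP"
          unfolding eq using antichain_snoc[OF _ aAB inc] 1(5) by blast
        have ext: "extends1 ?\<pi> (\<pi>0 @ map (\<lambda>a. (a, last \<beta>)) \<sigma>')" unfolding eq extends1_def by blast
        have sy: "simr ?r ?NP extends1 y (\<pi>0 @ map (\<lambda>a. (a, last \<beta>)) \<sigma>')"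
          using 1(1)[OF yr 1(2) s'(1) 1(4) mem] s'(3) sB yy True by simp
        show ?thesis using mem ext sy by blast
      next
        case False
        then have DD: "(D', D) \<in> mot B leB" "D' \<noteq> D" using yx by auto
        obtain \<beta>' where b': "\<beta>' \<in> bad_seqs B leB" "extends1 \<beta> \<beta>'" "simr (mot B leB) (bad_seqs B leB) extends1 D' \<beta>'"
          using simr_D[OF sB DD] by blast
        obtain b where b: "\<beta>' = \<beta> @ [b]" using b'(2) unfolding extends1_def by blast
        have bB: "b \<in> B" using b'(1) b unfolding bad_seqs_def by auto
        let ?Y = "fst ` set ?\<pi>"
        have Yfin: "finite ?Y" by simp
        have YA: "?Y \<subseteq> A" using piAB by force
        obtain a where a: "a \<in> not_below A leA ?Y"
          "simr (width A leA) (antichain_seqs (not_below A leA ?Y) leA) extends1 C' [a]"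
          using transfer_get[OF WA TA Yfin YA yx(1)] by blast
        have inc: "\<forall>z\<in>set ?\<pi>. incomparable (prod_le leA leB) z (a, b)"
        proof
          fix z assume z: "z \<in> set ?\<pi>"
          obtain za zb where zz: "z = (za, zb)" by (cases z)
          have "zb \<in> set \<beta>" using sndpi z zz by force
          then have nb: "\<not> leB zb b" using bad_snoc_D[of \<beta> b B leB zb] b'(1) b by simp
          have "za \<in> ?Y" using z zz by force
          then have na: "\<not> leA a za" using a(1) unfolding not_below_def by blast
          show "incomparable (prod_le leA leB) z (a, b)"
            using nb na zz unfolding incomparable_def prod_le_def by simp
        qed
        have aAB: "(a, b) \<in> A \<times> B" using a(1) bB not_below_sub[of A leA ?Y] by blast
        have lb: "last \<beta>' = b" using b by simp
        have eq: "?\<pi> @ map (\<lambda>a. (a, last \<beta>')) [a] = ?\<pi> @ [(a, b)]" using lb by simp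
        have mem: "?\<pi> @ map (\<lambda>a. (a, last \<beta>')) [a] \<in> ?NP"
          unfolding eq using antichain_snoc[OF _ aAB inc] 1(5) by blast
        have ext: "extends1 ?\<pi> (?\<pi> @ map (\<lambda>a. (a, last \<beta>')) [a])" unfolding eq extends1_def by blast
        have sing: "[a] \<in> antichain_seqs (not_below A leA ?Y) leA"
          using antichain_snoc[of "[]" "not_below A leA ?Y" leA a] a(1) by simp
        have sub': "snd ` set ?\<pi> \<subseteq> set (butlast \<beta>')" using sndpi b by simp
        have sy: "simr ?r ?NP extends1 y (?\<pi> @ map (\<lambda>a. (a, last \<beta>')) [a])"
          using 1(1)[OF yr b'(1) sing sub' mem] a(2) b'(3) yy by simp
        show ?thesis using mem ext sy by blast
      qed
    qed
  qed
qed


theorem mainTheorem5: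
  fixes A :: "'a set" and leA :: "'a \<Rightarrow> 'a \<Rightarrow> bool"
    and B :: "'b set" and leB :: "'b \<Rightarrow> 'b \<Rightarrow> bool"
  assumes "wqo_on A leA" and "transferable A leA" and "wqo_on B leB"
  shows "(ord_mult (width A leA) (mot B leB), width (A \<times> B) (prod_le leA leB)) \<in> ordLeq"
proof -
  let ?wA = "width A leA"
  let ?mB = "mot B leB"
  let ?r = "ord_mult ?wA ?mB"
  let ?NA = "antichain_seqs A leA"
  let ?NB = "bad_seqs B leB"
  let ?NP = "antichain_seqs (A \<times> B) (prod_le leA leB)"
  have WA1: "wfforest ?NA extends1" using wfforest_antichain[OF assms(1), of A] by simp
  have WB1: "wfforest ?NB extends1" using wfforest_bad[OF assms(3)] .
  have WP: "wfforest ?NP extends1" using fwf_prod[OF assms(1,3)] unfolding wfforest_def .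
  have WOA: "Well_order ?wA" unfolding width_def using wfforest.Well_order_forest_inv[OF WA1] .
  have WOB: "Well_order ?mB" unfolding mot_def using wfforest.Well_order_forest_inv[OF WB1] .
  have WOr: "Well_order ?r" using Well_order_ord_mult[OF WOA WOB] .
  have wfr: "wf (?r - Id)" using WOr unfolding well_order_on_def by blast
  have reflB: "\<And>b. b \<in> B \<Longrightarrow> leB b b" using assms(3) unfolding wqo_on_def qo_on_def by blast
  have S: "\<forall>x\<in>Field ?r. \<exists>s. simr ?r ?NP extends1 x s"
  proof
    fix x assume x: "x \<in> Field ?r"
    obtain C D where xx: "x = (C, D)" by (cases x)
    have CD: "C \<in> Field ?wA" "D \<in> Field ?mB" using x xx unfolding Field_def ord_mult_def by auto
    have "C \<in> rank_classes ?NA extends1" using CD(1) wfforest.Field_forest_inv[OF WA1] unfolding width_def by simp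
    then obtain \<sigma> where s: "\<sigma> \<in> ?NA" "C = cls ?NA extends1 \<sigma>" unfolding rank_classes_iff by blast
    have "D \<in> rank_classes ?NB extends1" using CD(2) wfforest.Field_forest_inv[OF WB1] unfolding mot_def by simp
    then obtain \<beta> where b: "\<beta> \<in> ?NB" "D = cls ?NB extends1 \<beta>" unfolding rank_classes_iff by blast
    have sA: "simr ?wA ?NA extends1 C \<sigma>" unfolding width_def using wfforest.simr_self[OF WA1 s(1)] s(2) by simp
    have sB: "simr ?mB ?NB extends1 D \<beta>" unfolding mot_def using wfforest.simr_self[OF WB1 b(1)] b(2) by simp
    have bne: "\<beta> \<noteq> []" using b(1) unfolding bad_seqs_def by blast
    have lastB: "last \<beta> \<in> B" using b(1) bne unfolding bad_seqs_def by auto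
    have NA0: "antichain_seqs (not_below A leA (fst ` set [])) leA = ?NA" by (simp add: not_below_empty)
    have mem: "[] @ map (\<lambda>a. (a, last \<beta>)) \<sigma> \<in> ?NP"
      using map_pair_antichain[of \<sigma> A leA "last \<beta>" B leB, OF s(1) lastB reflB[OF lastB]] by simp
    have "simr ?r ?NP extends1 x ([] @ map (\<lambda>a. (a, last \<beta>)) \<sigma>)"
      using main_claim[OF assms(1,2,3) wfr, of \<beta> \<sigma> "[]" x] b(1) s(1) NA0 mem sA sB xx by simp
    then show "\<exists>s. simr ?r ?NP extends1 x s" by blast
  qed
  show ?thesis unfolding width_def[of "A \<times> B"] using wfforest.simr_ordLeq[OF WP WOr S] .
qed


end
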